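(* Let $p$ be a prime number and let $x,y,z\in\mathbb{N}$ with $x\le y\le z$ satisfy $\frac{4}{p}=\frac{1}{x}+\frac{1}{y}+\frac{1}{z}$. Suppose the solution is of Type I, i.e. $\gcd(x,p)=1$, $\gcd(y,p)=1$ and $\gcd(z,p)=p$. Then $$x=\left\lceil \frac{yp}{4y-p}\right\rceil.$$
   Context: $\mathbb{N}$ denotes the positive integers; $\lceil\cdot\rceil$ is the ceiling function. *)

theory Defs
  imports Complex_Main "HOL-Computational_Algebra.Primes"
begin

end

theory Submission
  imports Defs
begin

theorem theorem2:
  fixes p x y z :: nat
  assumes "prime p"
    and "x > 0" and "y > 0" and "z > 0"
    and "x \<le> y" and "y \<le> z"
    and "4 / real p = 1 / real x + 1 / real y + 1 / real z"
    and "gcd x p = 1" and "gcd y p = 1" and "gcd z p = p"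
  shows "int x = \<lceil>real y * real p / (4 * real y - real p)\<rceil>"
proof -
  have p0: "p > 0" using assms(1) prime_gt_0_nat by blast
  have "p dvd z" using assms(10) by (metis gcd_dvd1)
  then obtain c where zc: "z = p * c" by blast
  have c0: "c > 0" using zc assms(4) by simp
  have "real (4*x*y*z) = real (p*(y*z+x*z+x*y))"
    using assms(7) assms(2-4) p0 by (simp add: field_simps)
  hence e1: "4*x*y*z = p*(y*z+x*z+x*y)" by linarith
  hence "p * (4*x*y*c) = p * (p*c*(x+y) + x*y)" unfolding zc by (simp add: algebra_simps)
  hence e2: "4*x*y*c = p*c*(x+y) + x*y" using p0 by simp
  define X where "X = int x"
  define Y where "Y = int y"
  define C where "C = int c"
  define P where "P = int p"
  have e3: "X*Y*(4*C-1) = P*C*(X+Y)" using arg_cong[OF e2, of int]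
    unfolding X_def Y_def C_def P_def by (simp add: algebra_simps)
  have pr: "prime P" using assms(1) P_def by simp
  have cx: "coprime P X" using assms(8) unfolding X_def P_def
    by (metis coprime_iff_gcd_eq_1 coprime_int_iff gcd.commute)
  have cy: "coprime P Y" using assms(9) unfolding Y_def P_def
    by (metis coprime_iff_gcd_eq_1 coprime_int_iff gcd.commute)
  have "P dvd X*Y*(4*C-1)" using e3 by simp
  hence "P dvd 4*C-1" using cx cy pr
    by (metis coprime_dvd_mult_right_iff coprime_mult_right_iff)
  then obtain k where kk: "4*C-1 = P*k" by blast
  have P0: "P > 0" "X > 0" "Y > 0" "C > 0" using p0 assms(2,3) c0 X_def Y_def C_def P_def by auto
  have "P*(k*X*Y) = (P*k)*X*Y" by (simp add: algebra_simps)
  also have "\<dots> = X*Y*(4*C-1)" using kk by simp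
  also have "\<dots> = P*(C*(X+Y))" using e3 by simp
  finally have "P*(k*X*Y) = P*(C*(X+Y))" .
  hence e4: "k*X*Y = C*(X+Y)" using P0 by simp
  have k0: "k > 0"
  proof (rule ccontr)
    assume "\<not> k > 0"
    hence "k*X*Y \<le> 0" using P0 by (simp add: mult_nonpos_nonneg)
    moreover have "C*(X+Y) > 0" using P0 by simp
    ultimately show False using e4 by simp
  qed
  have "4*(k*X*Y) = (4*C)*(X+Y)" using e4 by simp
  moreover have "4*C = P*k+1" using kk by simp
  ultimately have e5: "4*k*X*Y = (P*k+1)*(X+Y)" by (metis mult.assoc)
  define D where "D = 4*Y - P"
  have e6: "k*X*D = P*k*Y + X + Y" using e5 unfolding D_def by (simp add: algebra_simps)
  have D0: "D > 0"
  proof (rule ccontr)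
    assume "\<not> D > 0"
    hence "k*X*D \<le> 0" using P0 k0 by (simp add: mult_nonneg_nonpos)
    moreover have "P*k*Y > 0" using P0 k0 by simp
    ultimately show False using e6 P0 by linarith
  qed
  have xy: "X \<le> Y" using assms(5) X_def Y_def by simp
  have e7: "X*(k*D - 1) = Y*(P*k+1)" using e6 by (simp add: algebra_simps)
  have "Y*(k*D-1) \<ge> X*(k*D-1)"
  proof -
    have "k*D > 0" using D0 k0 by simp
    thus ?thesis using xy by (intro mult_right_mono) auto
  qed
  hence "Y*(k*D-1) \<ge> Y*(P*k+1)" using e7 by simp
  hence "k*D - 1 \<ge> P*k+1" using P0 by simp
  hence kD: "k*D \<ge> 2*k*Y+1" unfolding D_def by (simp add: algebra_simps)
  have "(X+Y)*(k*D-1) = 4*k*Y*Y" using e7 unfolding D_def by (simp add: algebra_simps)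
  also have "\<dots> < (k*D)*(k*D-1)"
  proof -
    have a1: "2*k*Y+1 \<le> k*D" "2*k*Y \<le> k*D-1" "0 \<le> k*D" "0 \<le> 2*k*Y"
    proof -
      have "0 \<le> k*Y" using P0 k0 by simp
      thus "2*k*Y+1 \<le> k*D" "2*k*Y \<le> k*D-1" "0 \<le> k*D" "0 \<le> 2*k*Y"
        using kD by linarith+
    qed
    have "(2*k*Y+1)*(2*k*Y) \<le> (k*D)*(k*D-1)"
      by (rule mult_mono[OF a1])
    moreover have "4*k*Y*Y < (2*k*Y+1)*(2*k*Y)"
    proof -
      have "4*k*Y*Y \<le> 4*k*k*Y*Y" using k0 P0 by (simp add: mult_right_mono)
      moreover have "(2*k*Y+1)*(2*k*Y) = 4*k*k*Y*Y + 2*k*Y" by (simp add: algebra_simps)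
      moreover have "2*k*Y > 0" using k0 P0 by simp
      ultimately show ?thesis by linarith
    qed
    ultimately show ?thesis by linarith
  qed
  finally have lt: "(X+Y)*(k*D-1) < (k*D)*(k*D-1)" .
  have "X + Y < k*D"
  proof (rule ccontr)
    assume "\<not> X + Y < k*D"
    hence "(k*D)*(k*D-1) \<le> (X+Y)*(k*D-1)" using kD P0 k0 D0 by (intro mult_right_mono) auto
    thus False using lt by simp
  qed
  hence i2: "k*(X-1)*D < P*k*Y" using e6 by (simp add: algebra_simps)
  have i1: "X*D > P*Y"
  proof -
    have "k*(X*D) > k*(P*Y)" using e6 P0 by (simp add: algebra_simps)
    thus ?thesis using k0 by simp
  qed
  have i2': "(X-1)*D < P*Y"
  proof -
    have "k*((X-1)*D) < k*(P*Y)" using i2 by (simp add: algebra_simps)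
    thus ?thesis using k0 by simp
  qed
  define Dr where "Dr = 4 * real y - real p"
  have DrD: "Dr = real_of_int D" unfolding Dr_def D_def Y_def P_def by simp
  have Dr0: "Dr > 0" using DrD D0 by simp
  have r1: "real_of_int (X*D) > real_of_int (P*Y)" using i1 by linarith
  have r2: "real_of_int ((X-1)*D) < real_of_int (P*Y)" using i2' by linarith
  show ?thesis
  proof (rule sym, rule ceiling_unique)
    show "real_of_int (int x) - 1 < real y * real p / (4 * real y - real p)"
      using r2 Dr0 unfolding Dr_def[symmetric] DrD[symmetric]
      by (simp add: field_simps X_def Y_def P_def DrD)
    show "real y * real p / (4 * real y - real p) \<le> real_of_int (int x)"
      using r1 Dr0 unfolding Dr_def[symmetric] DrD[symmetric]
      by (simp add: field_simps X_def Y_def P_def DrD)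
  qed
qed

end
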